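(* For every $0<\epsilon<1$ and every integer $m\ge2$ there exists a scheduling game on $m$ identical machines of speed $1$ with a global priority list, in which every job has negative deterioration $p_i(t)=\max\{\tau_i,b_i-a_it\}$ with $0\le a_i\le1$, having a pure Nash equilibrium $\sigma$ with $C_{\max}(\sigma)\ge\left(3-\frac2m-\epsilon\right)OPT(G)$. Hence the bound $3-\frac2m$ on the price of anarchy of this class is tight.
   Context: Scheduling game: a finite set $N$ of $n$ jobs (players) and a set $M$ of $m$ machines; machine $j$ has speed $s_j>0$. With a global priority list, all machines share the same bijection $\pi:N\to\{1,\dots,n\}$, and job $u$ has higher priority than $v$ iff $\pi(u)<\pi(v)$. Negative deterioration: $p_i(t)=\max\{\tau_i,b_i-a_it\}$ with $b_i,a_i\ge0$, $\tau_i>0$ ($a_i=0$ gives a fixed-length job). A profile $\sigma\in M^N$ assigns each job to a machine. On machine $j$, the jobs assigned to it, listed in increasing $\pi$-order as $i_1,i_2,\dots$, are processed without idle time: $S_{i_1}(\sigma)=0$, $C_{i_k}(\sigma)=S_{i_k}(\sigma)+p_{i_k}(S_{i_k}(\sigma))/s_j$, $S_{i_{k+1}}(\sigma)=C_{i_k}(\sigma)$. The cost of job $i$ is $C_i(\sigma)$. A pure Nash equilibrium (NE) is a profile in which no job can strictly decrease its completion time by unilaterally changing its machine. Makespan $C_{\max}(\sigma)=\max_iC_i(\sigma)$; $OPT(G)=\min_\sigma C_{\max}(\sigma)$ over all profiles. *)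

theory Defs
  imports Complex_Main "HOL-Library.FuncSet"
begin

text \<open>Jobs are 0..<n, machines are 0..<m.
  Job i has processing time p_i(t) = max tau_i (b_i - a_i t).
  pi is the global priority list (a bijection onto 1..n; smaller = higher priority).\<close>

definition ptime :: "(nat \<Rightarrow> real) \<Rightarrow> (nat \<Rightarrow> real) \<Rightarrow> (nat \<Rightarrow> real) \<Rightarrow> nat \<Rightarrow> real \<Rightarrow> real" where
  "ptime \<tau> a b i t = max (\<tau> i) (b i - a i * t)"

definition jobs_before :: "nat \<Rightarrow> (nat \<Rightarrow> nat) \<Rightarrow> (nat \<Rightarrow> nat) \<Rightarrow> nat \<Rightarrow> nat list" where
  "jobs_before n \<pi> \<sigma> i = filter (\<lambda>k. \<sigma> k = \<sigma> i \<and> \<pi> k < \<pi> i) (sort_key \<pi> [0..<n])"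

definition start_time :: "nat \<Rightarrow> (nat \<Rightarrow> real) \<Rightarrow> (nat \<Rightarrow> nat) \<Rightarrow> (nat \<Rightarrow> real) \<Rightarrow> (nat \<Rightarrow> real) \<Rightarrow> (nat \<Rightarrow> real)
    \<Rightarrow> (nat \<Rightarrow> nat) \<Rightarrow> nat \<Rightarrow> real" where
  "start_time n s \<pi> \<tau> a b \<sigma> i =
     foldl (\<lambda>t k. t + ptime \<tau> a b k t / s (\<sigma> i)) 0 (jobs_before n \<pi> \<sigma> i)"

definition compl_time :: "nat \<Rightarrow> (nat \<Rightarrow> real) \<Rightarrow> (nat \<Rightarrow> nat) \<Rightarrow> (nat \<Rightarrow> real) \<Rightarrow> (nat \<Rightarrow> real) \<Rightarrow> (nat \<Rightarrow> real)
    \<Rightarrow> (nat \<Rightarrow> nat) \<Rightarrow> nat \<Rightarrow> real" where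
  "compl_time n s \<pi> \<tau> a b \<sigma> i =
     (let st = start_time n s \<pi> \<tau> a b \<sigma> i in st + ptime \<tau> a b i st / s (\<sigma> i))"

definition is_profile :: "nat \<Rightarrow> nat \<Rightarrow> (nat \<Rightarrow> nat) \<Rightarrow> bool" where
  "is_profile n m \<sigma> \<longleftrightarrow> (\<forall>i<n. \<sigma> i < m)"

definition is_NE :: "nat \<Rightarrow> nat \<Rightarrow> (nat \<Rightarrow> real) \<Rightarrow> (nat \<Rightarrow> nat) \<Rightarrow> (nat \<Rightarrow> real) \<Rightarrow> (nat \<Rightarrow> real) \<Rightarrow> (nat \<Rightarrow> real)
    \<Rightarrow> (nat \<Rightarrow> nat) \<Rightarrow> bool" where
  "is_NE n m s \<pi> \<tau> a b \<sigma> \<longleftrightarrow> is_profile n m \<sigma> \<and>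
     (\<forall>i<n. \<forall>j<m. \<not> compl_time n s \<pi> \<tau> a b (\<sigma>(i := j)) i < compl_time n s \<pi> \<tau> a b \<sigma> i)"

definition Cmax :: "nat \<Rightarrow> (nat \<Rightarrow> real) \<Rightarrow> (nat \<Rightarrow> nat) \<Rightarrow> (nat \<Rightarrow> real) \<Rightarrow> (nat \<Rightarrow> real) \<Rightarrow> (nat \<Rightarrow> real)
    \<Rightarrow> (nat \<Rightarrow> nat) \<Rightarrow> real" where
  "Cmax n s \<pi> \<tau> a b \<sigma> = Max ((compl_time n s \<pi> \<tau> a b \<sigma>) ` {..<n})"

text \<open>Optimal makespan over all profiles (profiles restricted to jobs, as extensional functions).\<close>
definition OPT :: "nat \<Rightarrow> nat \<Rightarrow> (nat \<Rightarrow> real) \<Rightarrow> (nat \<Rightarrow> nat) \<Rightarrow> (nat \<Rightarrow> real) \<Rightarrow> (nat \<Rightarrow> real) \<Rightarrow> (nat \<Rightarrow> real) \<Rightarrow> real" where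
  "OPT n m s \<pi> \<tau> a b = Min ((Cmax n s \<pi> \<tau> a b) ` ({..<n} \<rightarrow>\<^sub>E {..<m}))"

end

theory Submission
  imports Defs
begin

definition Gs :: "(nat \<Rightarrow> real) \<Rightarrow> (nat \<Rightarrow> real) \<Rightarrow> (nat \<Rightarrow> real) \<Rightarrow> real \<Rightarrow> nat \<Rightarrow> real" where
  "Gs \<tau> a b t k = t + ptime \<tau> a b k t"

definition load :: "(nat \<Rightarrow> real) \<Rightarrow> (nat \<Rightarrow> real) \<Rightarrow> (nat \<Rightarrow> real) \<Rightarrow> (nat \<Rightarrow> nat) \<Rightarrow> nat \<Rightarrow> nat \<Rightarrow> real" where
  "load \<tau> a b \<sigma> j i = foldl (Gs \<tau> a b) 0 (filter (\<lambda>k. \<sigma> k = j) [0..<i])"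

lemma load_0: "load \<tau> a b \<sigma> j 0 = 0"
  by (simp add: load_def)

lemma load_Suc: "load \<tau> a b \<sigma> j (Suc i) = (if \<sigma> i = j then Gs \<tau> a b (load \<tau> a b \<sigma> j i) i else load \<tau> a b \<sigma> j i)"
  by (simp add: load_def)

lemma load_none: "(\<forall>k<i. \<sigma> k \<noteq> j) \<Longrightarrow> load \<tau> a b \<sigma> j i = 0"
  by (induction i) (auto simp: load_0 load_Suc)

lemma load_upd: "i' \<le> i \<Longrightarrow> load \<tau> a b (\<sigma>(i := j')) j i' = load \<tau> a b \<sigma> j i'"
  by (induction i') (auto simp: load_0 load_Suc)

lemma filter_lt: "filter (\<lambda>k. P k \<and> Suc k < Suc i) [0..<n] = filter P [0..<min i n]"
  by (induction n) (auto simp: min_def le_Suc_eq)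

lemma compl_eq: "i < n \<Longrightarrow> compl_time n (\<lambda>_. 1) Suc \<tau> a b \<sigma> i = load \<tau> a b \<sigma> (\<sigma> i) (Suc i)"
proof -
  assume "i < n"
  have s: "sort_key Suc [0..<n] = [0..<n]"
    by (rule sort_key_id_if_sorted) (simp add: sorted_map)
  have eta: "(\<lambda>t k. t + ptime \<tau> a b k t / 1) = Gs \<tau> a b" by (auto simp: Gs_def fun_eq_iff)
  have "start_time n (\<lambda>_. 1) Suc \<tau> a b \<sigma> i = load \<tau> a b \<sigma> (\<sigma> i) i"
    unfolding start_time_def jobs_before_def s filter_lt load_def eta
    using \<open>i < n\<close> by (simp add: min_def)
  then show ?thesis by (simp add: compl_time_def load_Suc Gs_def Let_def)
qed

lemma compl_upd: "i < n \<Longrightarrow> compl_time n (\<lambda>_. 1) Suc \<tau> a b (\<sigma>(i:=j)) i = Gs \<tau> a b (load \<tau> a b \<sigma> j i) i"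
  by (simp add: compl_eq load_Suc load_upd)

lemma card_lb: "j < m \<Longrightarrow> r div m \<le> card {r'. r' < r \<and> r' mod m = j}"
proof -
  assume j: "j < m"
  have inj: "inj_on (\<lambda>q. q*m + j) {..<r div m}" by (auto simp: inj_on_def)
  have sub: "(\<lambda>q. q*m + j) ` {..<r div m} \<subseteq> {r'. r' < r \<and> r' mod m = j}"
  proof
    fix x assume "x \<in> (\<lambda>q. q*m + j) ` {..<r div m}"
    then obtain q where q: "q < r div m" "x = q*m+j" by auto
    have "Suc q * m \<le> (r div m) * m" using q(1) by (meson Suc_leI mult_le_mono1)
    also have "\<dots> \<le> r" by simp
    finally have "x < r" using q j by simp
    then show "x \<in> {r'. r' < r \<and> r' mod m = j}" using q j by simp
  qed
  have "card ((\<lambda>q. q*m + j) ` {..<r div m}) \<le> card {r'. r' < r \<and> r' mod m = j}"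
    by (rule card_mono[OF _ sub]) simp
  then show ?thesis using card_image[OF inj] by simp
qed

lemma card_ub: "0 < m \<Longrightarrow> card {r'. r' < r \<and> r' mod m = r mod m} \<le> r div m"
proof -
  assume m: "0 < m"
  have inj: "inj_on (\<lambda>r'. r' div m) {r'. r' < r \<and> r' mod m = r mod m}"
  proof (rule inj_onI)
    fix x y assume "x \<in> {r'. r' < r \<and> r' mod m = r mod m}" "y \<in> {r'. r' < r \<and> r' mod m = r mod m}"
      "x div m = y div m"
    then show "x = y" using div_mult_mod_eq[of x m] div_mult_mod_eq[of y m] by simp
  qed
  have sub: "(\<lambda>r'. r' div m) ` {r'. r' < r \<and> r' mod m = r mod m} \<subseteq> {..<r div m}"
  proof
    fix x assume "x \<in> (\<lambda>r'. r' div m) ` {r'. r' < r \<and> r' mod m = r mod m}"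
    then obtain r' where r': "r' < r" "r' mod m = r mod m" "x = r' div m" by auto
    show "x \<in> {..<r div m}"
    proof (rule ccontr)
      assume "x \<notin> {..<r div m}"
      then have "r div m \<le> r' div m" using r' by simp
      then have "r div m * m \<le> r' div m * m" by (rule mult_le_mono1)
      then show False using r'(1,2) div_mult_mod_eq[of r m] div_mult_mod_eq[of r' m] by linarith
    qed
  qed
  from card_inj_on_le[OF inj sub] show ?thesis by simp
qed

lemma card_ub2: "0 < m \<Longrightarrow> card {r'. r' < r \<and> r' div m = r div m} \<le> r mod m"
proof -
  assume m: "0 < m"
  have "{r'. r' < r \<and> r' div m = r div m} \<subseteq> {r div m * m..<r}"
  proof
    fix x assume x: "x \<in> {r'. r' < r \<and> r' div m = r div m}"
    then have "r div m * m = x div m * m" by simp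
    also have "\<dots> \<le> x" by (rule div_times_less_eq_dividend)
    finally show "x \<in> {r div m * m..<r}" using x by simp
  qed
  then have "card {r'. r' < r \<and> r' div m = r div m} \<le> card {r div m * m..<r}"
    by (rule card_mono[rotated]) simp
  also have "\<dots> = r - r div m * m" by simp
  also have "\<dots> = r mod m" by (rule minus_div_mult_eq_mod)
  finally show ?thesis .
qed


definition Pn :: "nat \<Rightarrow> nat" where "Pn m = m * (m - 2)"

definition tauI :: "nat \<Rightarrow> real \<Rightarrow> nat \<Rightarrow> real" where
  "tauI m \<delta> i = (if i = 0 then 1 else if i < m then \<delta> else if i < m + Pn m then 1 / real m else 1)"

definition aI :: "nat \<Rightarrow> nat \<Rightarrow> real" where
  "aI m i = (if 1 \<le> i \<and> i < m then 1 else 0)"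

definition sigN :: "nat \<Rightarrow> nat \<Rightarrow> nat" where
  "sigN m i = (if i = 0 then 0 else if i < m then i else if i < m + Pn m then (i - m) mod m else 0)"

definition omg :: "nat \<Rightarrow> nat \<Rightarrow> nat" where
  "omg m i = (if i < m then 0 else if i < m + Pn m then Suc ((i - m) div m)
     else if i = m + Pn m then m - 1 else undefined)"

lemma GsH: "m \<ge> 2 \<Longrightarrow> Gs (tauI m \<delta>) (aI m) (aI m) t 0 = t + 1"
  by (simp add: Gs_def ptime_def tauI_def aI_def)

lemma GsD: "1 \<le> i \<Longrightarrow> i < m \<Longrightarrow> Gs (tauI m \<delta>) (aI m) (aI m) t i = t + max \<delta> (1 - t)"
  by (simp add: Gs_def ptime_def tauI_def aI_def)

lemma GsP: "m \<ge> 2 \<Longrightarrow> m \<le> i \<Longrightarrow> i < m + Pn m \<Longrightarrow> Gs (tauI m \<delta>) (aI m) (aI m) t i = t + 1 / real m"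
  by (simp add: Gs_def ptime_def tauI_def aI_def)

lemma GsL: "m \<ge> 2 \<Longrightarrow> Gs (tauI m \<delta>) (aI m) (aI m) t (m + Pn m) = t + 1"
  by (simp add: Gs_def ptime_def tauI_def aI_def)

lemma N1:
  assumes m: "m \<ge> 2" and d: "0 < \<delta>" "\<delta> < 1"
  shows "i \<le> m \<Longrightarrow> j < m \<Longrightarrow> load (tauI m \<delta>) (aI m) (aI m) (sigN m) j i =
     (if j = 0 then (if 1 \<le> i then 1 else 0) else if j < i then 1 else 0)"
proof (induction i arbitrary: j)
  case 0
  then show ?case by (simp add: load_0)
next
  case (Suc i)
  then have im: "i < m" by simp
  show ?case
  proof (cases "i = 0")
    case True
    then show ?thesis using Suc m by (auto simp: load_Suc load_0 sigN_def GsH)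
  next
    case False
    then have s: "sigN m i = i" using im by (simp add: sigN_def)
    have l: "load (tauI m \<delta>) (aI m) (aI m) (sigN m) i i = 0" using Suc.IH[of i] im False by simp
    have i1: "1 \<le> i" using False by simp
    have g: "Gs (tauI m \<delta>) (aI m) (aI m) 0 i = 1" using GsD[OF i1 im, of \<delta> 0] d by (simp add: max_def)
    show ?thesis
    proof (cases "j = i")
      case True
      then show ?thesis using False by (simp add: load_Suc s l g)
    next
      case False
      then have "sigN m i \<noteq> j" using s by simp
      then show ?thesis using Suc.IH[of j] im Suc.prems False \<open>i \<noteq> 0\<close>
        by (simp add: load_Suc)
    qed
  qed
qed


lemma N2:
  assumes m: "m \<ge> 2" and d: "0 < \<delta>" "\<delta> < 1" and j: "j < m"
  shows "r \<le> Pn m \<Longrightarrow> load (tauI m \<delta>) (aI m) (aI m) (sigN m) j (m + r) =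
     1 + real (card {r'. r' < r \<and> r' mod m = j}) / real m"
proof (induction r)
  case 0
  then show ?case using N1[OF m d, of m j] j by simp
next
  case (Suc r)
  then have r: "r < Pn m" by simp
  have s: "sigN m (m + r) = r mod m" using r m by (simp add: sigN_def)
  have g: "Gs (tauI m \<delta>) (aI m) (aI m) t (m + r) = t + 1 / real m" for t
    using GsP[of m "m + r" \<delta> t] m r by simp
  show ?case
  proof (cases "r mod m = j")
    case True
    have e: "{r'. r' < Suc r \<and> r' mod m = j} = insert r {r'. r' < r \<and> r' mod m = j}"
      using True by auto
    have c: "card {r'. r' < Suc r \<and> r' mod m = j} = Suc (card {r'. r' < r \<and> r' mod m = j})"
      unfolding e by (subst card_insert_disjoint) auto
    show ?thesis using Suc.IH r True
      by (simp add: load_Suc s g c add_divide_distrib)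
  next
    case False
    have e: "{r'. r' < Suc r \<and> r' mod m = j} = {r'. r' < r \<and> r' mod m = j}"
      using False less_Suc_eq by auto
    show ?thesis using Suc.IH r False
      by (simp add: load_Suc s e)
  qed
qed

lemma O1:
  assumes m: "m \<ge> 2" and d: "0 < \<delta>" "\<delta> < 1"
  shows "i \<le> m \<Longrightarrow> load (tauI m \<delta>) (aI m) (aI m) (omg m) 0 i =
     (if i = 0 then 0 else 1 + real (i - 1) * \<delta>)"
proof (induction i)
  case 0
  then show ?case by (simp add: load_0)
next
  case (Suc i)
  then have im: "i < m" by simp
  have o: "omg m i = 0" using im by (simp add: omg_def)
  show ?case
  proof (cases "i = 0")
    case True
    then show ?thesis using m by (simp add: load_Suc load_0 omg_def GsH)
  next
    case False
    define x where "x = real (i - 1) * \<delta>"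
    have l: "load (tauI m \<delta>) (aI m) (aI m) (omg m) 0 i = 1 + x"
      using Suc.IH im False unfolding x_def by simp
    have x0: "0 \<le> x" using d unfolding x_def by simp
    have mx: "max \<delta> (1 - (1 + x)) = \<delta>" by (rule max_absorb1) (use x0 d in linarith)
    have i1: "1 \<le> i" using False by simp
    have g: "Gs (tauI m \<delta>) (aI m) (aI m) (1 + x) i = 1 + x + \<delta>"
      unfolding GsD[OF i1 im] mx by simp
    have ri: "real (i - 1) = real i - 1" using i1 by (simp add: of_nat_diff)
    have e: "1 + x + \<delta> = 1 + real (Suc i - 1) * \<delta>"
      unfolding x_def ri by (simp add: algebra_simps)
    have "load (tauI m \<delta>) (aI m) (aI m) (omg m) 0 (Suc i) = 1 + x + \<delta>"
      unfolding load_Suc o l g by simp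
    then show ?thesis unfolding e by simp
  qed
qed

lemma O2:
  assumes m: "m \<ge> 2" and d: "0 < \<delta>" "\<delta> < 1" and j: "1 \<le> j"
  shows "r \<le> Pn m \<Longrightarrow> load (tauI m \<delta>) (aI m) (aI m) (omg m) j (m + r) =
     real (card {r'. r' < r \<and> Suc (r' div m) = j}) / real m"
proof (induction r)
  case 0
  have "load (tauI m \<delta>) (aI m) (aI m) (omg m) j m = 0"
    by (rule load_none) (use j in \<open>simp add: omg_def\<close>)
  then show ?case by simp
next
  case (Suc r)
  then have r: "r < Pn m" by simp
  have s: "omg m (m + r) = Suc (r div m)" using r m by (simp add: omg_def)
  have g: "Gs (tauI m \<delta>) (aI m) (aI m) t (m + r) = t + 1 / real m" for t
    using GsP[of m "m + r" \<delta> t] m r by simp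
  show ?case
  proof (cases "Suc (r div m) = j")
    case True
    have e: "{r'. r' < Suc r \<and> Suc (r' div m) = j} = insert r {r'. r' < r \<and> Suc (r' div m) = j}"
      using True by auto
    have c: "card {r'. r' < Suc r \<and> Suc (r' div m) = j} = Suc (card {r'. r' < r \<and> Suc (r' div m) = j})"
      unfolding e by (subst card_insert_disjoint) auto
    show ?thesis using Suc.IH r True
      by (simp add: load_Suc s g c add_divide_distrib)
  next
    case False
    have e: "{r'. r' < Suc r \<and> Suc (r' div m) = j} = {r'. r' < r \<and> Suc (r' div m) = j}"
      using False less_Suc_eq by auto
    show ?thesis using Suc.IH r False
      by (simp add: load_Suc s e)
  qed
qed

lemma O3:
  assumes m: "m \<ge> 2"
  shows "load (tauI m \<delta>) (aI m) (aI m) (omg m) (m - 1) (m + Pn m) = 0"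
proof (rule load_none, intro allI impI)
  fix k assume k: "k < m + Pn m"
  show "omg m k \<noteq> m - 1"
  proof (cases "k < m")
    case True then show ?thesis using m by (simp add: omg_def)
  next
    case False
    then have "k - m < (m - 2) * m" using k by (simp add: Pn_def mult.commute)
    then have "(k - m) div m < m - 2" by (rule less_mult_imp_div_less)
    moreover have "omg m k = Suc ((k - m) div m)" using False k by (simp add: omg_def)
    ultimately show ?thesis by linarith
  qed
qed


lemma Pn_div: "m \<ge> 2 \<Longrightarrow> Pn m div m = m - 2"
  by (simp add: Pn_def)

lemma Pn_mod: "Pn m mod m = 0"
  by (simp add: Pn_def)

lemma NE_part:
  assumes m: "m \<ge> 2" and d: "0 < \<delta>" "\<delta> < 1"
  shows "is_NE (Suc (m + Pn m)) m (\<lambda>_. 1) Suc (tauI m \<delta>) (aI m) (aI m) (sigN m)"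
  unfolding is_NE_def is_profile_def
proof (intro conjI allI impI)
  fix i assume "i < Suc (m + Pn m)"
  show "sigN m i < m" using m by (simp add: sigN_def)
next
  fix i j assume i: "i < Suc (m + Pn m)" and j: "j < m"
  let ?T = "tauI m \<delta>" and ?A = "aI m" and ?s = "sigN m"
  have cu: "compl_time (Suc (m + Pn m)) (\<lambda>_. 1) Suc ?T ?A ?A (?s(i := j)) i = Gs ?T ?A ?A (load ?T ?A ?A ?s j i) i"
    by (rule compl_upd[OF i])
  have cc: "compl_time (Suc (m + Pn m)) (\<lambda>_. 1) Suc ?T ?A ?A ?s i = Gs ?T ?A ?A (load ?T ?A ?A ?s (?s i) i) i"
    using compl_upd[OF i, of ?T ?A ?A ?s "?s i"] by simp
  have "Gs ?T ?A ?A (load ?T ?A ?A ?s (?s i) i) i \<le> Gs ?T ?A ?A (load ?T ?A ?A ?s j i) i"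
  proof (cases "i = 0")
    case True
    then show ?thesis by (simp add: load_0)
  next
    case False
    then have i1: "1 \<le> i" by simp
    show ?thesis
    proof (cases "i < m")
      case True
      have si: "?s i = i" using True False by (simp add: sigN_def)
      have l0: "load ?T ?A ?A ?s i i = 0" using N1[OF m d, of i i] True False by simp
      have "Gs ?T ?A ?A (load ?T ?A ?A ?s (?s i) i) i = 1"
        unfolding si l0 GsD[OF i1 True] using d by (simp add: max_def)
      also have "1 \<le> Gs ?T ?A ?A (load ?T ?A ?A ?s j i) i"
        unfolding GsD[OF i1 True] by (simp add: max_def)
      finally show ?thesis .
    next
      case False2: False
      show ?thesis
      proof (cases "i < m + Pn m")
        case True
        define r where "r = i - m"
        have ir: "i = m + r" using False2 r_def by simp
        have rP: "r \<le> Pn m" using True ir by simp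
        have si: "?s i = r mod m" using True False2 ir by (simp add: sigN_def)
        have g: "Gs ?T ?A ?A t i = t + 1 / real m" for t using GsP[of m i \<delta> t] m True False2 by simp
        have mm: "r mod m < m" using m by simp
        have c1: "card {r'. r' < r \<and> r' mod m = r mod m} \<le> card {r'. r' < r \<and> r' mod m = j}"
          using card_ub[of m r] card_lb[OF j, of r] m by simp
        have "real (card {r'. r' < r \<and> r' mod m = r mod m}) / real m \<le> real (card {r'. r' < r \<and> r' mod m = j}) / real m"
          using c1 m by (simp add: divide_right_mono)
        then show ?thesis unfolding g si unfolding ir N2[OF m d mm rP] N2[OF m d j rP] by simp
      next
        case False3: False
        then have ii: "i = m + Pn m" using i by simp
        have si: "?s i = 0" using ii m by (simp add: sigN_def)
        have g: "Gs ?T ?A ?A t i = t + 1" for t using GsL[of m \<delta> t] m ii by simp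
        have m0: "0 < m" using m by simp
        have c1: "card {r'. r' < Pn m \<and> r' mod m = 0} \<le> card {r'. r' < Pn m \<and> r' mod m = j}"
          using card_ub[OF m0, of "Pn m"] card_lb[OF j, of "Pn m"] by (simp add: Pn_mod)
        have "real (card {r'. r' < Pn m \<and> r' mod m = 0}) / real m \<le> real (card {r'. r' < Pn m \<and> r' mod m = j}) / real m"
          using c1 m by (simp add: divide_right_mono)
        then show ?thesis unfolding g si unfolding ii N2[OF m d m0 order_refl] N2[OF m d j order_refl] by simp
      qed
    qed
  qed
  then show "\<not> compl_time (Suc (m + Pn m)) (\<lambda>_. 1) Suc ?T ?A ?A (?s(i := j)) i
      < compl_time (Suc (m + Pn m)) (\<lambda>_. 1) Suc ?T ?A ?A ?s i"
    unfolding cu cc by simp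
qed


lemma compl_self: "i < n \<Longrightarrow> compl_time n (\<lambda>_. 1) Suc \<tau> a b \<sigma> i = Gs \<tau> a b (load \<tau> a b \<sigma> (\<sigma> i) i) i"
  using compl_upd[of i n \<tau> a b \<sigma> "\<sigma> i"] by simp

lemma Cmax_lb:
  assumes m: "m \<ge> 2" and d: "0 < \<delta>" "\<delta> < 1"
  shows "3 - 2 / real m \<le> Cmax (Suc (m + Pn m)) (\<lambda>_. 1) Suc (tauI m \<delta>) (aI m) (aI m) (sigN m)"
proof -
  let ?T = "tauI m \<delta>" and ?A = "aI m" and ?s = "sigN m" and ?n = "Suc (m + Pn m)"
  have m0: "0 < m" using m by simp
  have si: "?s (m + Pn m) = 0" using m by (simp add: sigN_def)
  have cl: "m - 2 \<le> card {r'. r' < Pn m \<and> r' mod m = 0}"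
    using card_lb[OF m0, of "Pn m"] Pn_div[OF m] by simp
  have "real (m - 2) / real m \<le> real (card {r'. r' < Pn m \<and> r' mod m = 0}) / real m"
    using cl m0 by (simp add: divide_right_mono)
  moreover have "real (m - 2) / real m = 1 - 2 / real m" using m m0 by (simp add: of_nat_diff field_simps)
  ultimately have "3 - 2 / real m \<le> compl_time ?n (\<lambda>_. 1) Suc ?T ?A ?A ?s (m + Pn m)"
    unfolding compl_self[of "m + Pn m" ?n, OF lessI] si GsL[OF m] N2[OF m d m0 order_refl] by simp
  also have "\<dots> \<le> Cmax ?n (\<lambda>_. 1) Suc ?T ?A ?A ?s"
    unfolding Cmax_def by (rule Max_ge) auto
  finally show ?thesis .
qed

lemma Cmax_ub:
  assumes m: "m \<ge> 2" and d: "0 < \<delta>" "\<delta> < 1"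
  shows "Cmax (Suc (m + Pn m)) (\<lambda>_. 1) Suc (tauI m \<delta>) (aI m) (aI m) (omg m) \<le> 1 + real (m - 1) * \<delta>"
  unfolding Cmax_def
proof (rule Max.boundedI)
  show "finite (compl_time (Suc (m + Pn m)) (\<lambda>_. 1) Suc (tauI m \<delta>) (aI m) (aI m) (omg m) ` {..<Suc (m + Pn m)})" by simp
  show "compl_time (Suc (m + Pn m)) (\<lambda>_. 1) Suc (tauI m \<delta>) (aI m) (aI m) (omg m) ` {..<Suc (m + Pn m)} \<noteq> {}"
  proof -
    have "0 \<in> {..<Suc (m + Pn m)}" by simp
    then show ?thesis by blast
  qed
next
  let ?T = "tauI m \<delta>" and ?A = "aI m" and ?s = "omg m" and ?n = "Suc (m + Pn m)"
  fix y assume "y \<in> compl_time ?n (\<lambda>_. 1) Suc ?T ?A ?A ?s ` {..<?n}"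
  then obtain i where i: "i < ?n" and y: "y = compl_time ?n (\<lambda>_. 1) Suc ?T ?A ?A ?s i" by auto
  have m0: "0 < m" using m by simp
  have ce: "y = load ?T ?A ?A ?s (?s i) (Suc i)" using y compl_eq[OF i] by simp
  show "y \<le> 1 + real (m - 1) * \<delta>"
  proof (cases "i < m")
    case True
    have si: "?s i = 0" using True by (simp add: omg_def)
    have "load ?T ?A ?A ?s 0 (Suc i) = 1 + real i * \<delta>" using O1[OF m d, of "Suc i"] True by simp
    then have "y = 1 + real i * \<delta>" unfolding ce si .
    also have "\<dots> \<le> 1 + real (m - 1) * \<delta>" using True d by (simp add: mult_right_mono)
    finally show ?thesis .
  next
    case False
    show ?thesis
    proof (cases "i < m + Pn m")
      case True
      define r where "r = i - m"
      have ir: "i = m + r" using False r_def by simp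
      have rP: "r \<le> Pn m" using True ir by simp
      have si: "?s i = Suc (r div m)" using True False ir by (simp add: omg_def)
      have g: "Gs ?T ?A ?A t i = t + 1 / real m" for t using GsP[of m i \<delta> t] m True False by simp
      have ys: "y = Gs ?T ?A ?A (load ?T ?A ?A ?s (?s i) i) i" using y compl_self[OF i] by simp
      have cs: "{r'. r' < r \<and> Suc (r' div m) = Suc (r div m)} = {r'. r' < r \<and> r' div m = r div m}" by simp
      have c: "card {r'. r' < r \<and> r' div m = r div m} + 1 \<le> m"
        using card_ub2[OF m0, of r] mod_less_divisor[OF m0, of r] by linarith
      have l: "load ?T ?A ?A ?s (Suc (r div m)) (m + r) = real (card {r'. r' < r \<and> r' div m = r div m}) / real m"
        using O2[OF m d _ rP, of "Suc (r div m)"] cs by simp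
      have "y = real (card {r'. r' < r \<and> r' div m = r div m}) / real m + 1 / real m"
        unfolding ys g si unfolding ir l by simp
      also have "\<dots> = real (card {r'. r' < r \<and> r' div m = r div m} + 1) / real m"
        by (simp add: add_divide_distrib)
      also have "\<dots> \<le> 1" using c m0 by simp
      also have "1 \<le> 1 + real (m - 1) * \<delta>" using d by simp
      finally show ?thesis .
    next
      case False3: False
      then have ii: "i = m + Pn m" using i by simp
      have si: "?s i = m - 1" using ii by (simp add: omg_def)
      have ys: "y = Gs ?T ?A ?A (load ?T ?A ?A ?s (?s i) i) i" using y compl_self[OF i] by simp
      have "y = 1" unfolding ys si unfolding ii O3[OF m] GsL[OF m] by simp
      also have "1 \<le> 1 + real (m - 1) * \<delta>" using d by simp
      finally show ?thesis .
    qed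
  qed
qed

lemma OPT_ub:
  assumes m: "m \<ge> 2" and d: "0 < \<delta>" "\<delta> < 1"
  shows "OPT (Suc (m + Pn m)) m (\<lambda>_. 1) Suc (tauI m \<delta>) (aI m) (aI m) \<le> 1 + real (m - 1) * \<delta>"
proof -
  have mem: "omg m \<in> {..<Suc (m + Pn m)} \<rightarrow>\<^sub>E {..<m}"
  proof (unfold PiE_iff, intro conjI ballI)
    fix i assume "i \<in> {..<Suc (m + Pn m)}"
    then have i: "i \<le> m + Pn m" by simp
    show "omg m i \<in> {..<m}"
    proof (cases "i < m")
      case True then show ?thesis by (simp add: omg_def)
    next
      case False
      show ?thesis
      proof (cases "i < m + Pn m")
        case True
        then have "i - m < (m - 2) * m" using False by (simp add: Pn_def mult.commute)
        then have "(i - m) div m < m - 2" by (rule less_mult_imp_div_less)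
        then show ?thesis using True False m by (simp add: omg_def)
      next
        case False2: False
        then show ?thesis using i m False by (simp add: omg_def)
      qed
    qed
  next
    show "omg m \<in> extensional {..<Suc (m + Pn m)}"
      by (simp add: extensional_def omg_def)
  qed
  have "OPT (Suc (m + Pn m)) m (\<lambda>_. 1) Suc (tauI m \<delta>) (aI m) (aI m)
        \<le> Cmax (Suc (m + Pn m)) (\<lambda>_. 1) Suc (tauI m \<delta>) (aI m) (aI m) (omg m)"
  proof -
    have fin: "finite (Cmax (Suc (m + Pn m)) (\<lambda>_. 1) Suc (tauI m \<delta>) (aI m) (aI m) ` ({..<Suc (m + Pn m)} \<rightarrow>\<^sub>E {..<m}))"
      by (intro finite_imageI finite_PiE) auto
    show ?thesis unfolding OPT_def by (rule Min_le[OF fin imageI[OF mem]])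
  qed
  also have "\<dots> \<le> 1 + real (m - 1) * \<delta>" by (rule Cmax_ub[OF m d])
  finally show ?thesis .
qed


theorem theorem15:
  fixes \<epsilon> :: real and m :: nat
  assumes "0 < \<epsilon>" and "\<epsilon> < 1" and "m \<ge> 2"
  shows "\<exists>(n::nat) (\<pi>::nat \<Rightarrow> nat) (\<tau>::nat \<Rightarrow> real) (a::nat \<Rightarrow> real) (b::nat \<Rightarrow> real) (\<sigma>::nat \<Rightarrow> nat).
           n \<ge> 1 \<and> bij_betw \<pi> {..<n} {1..n} \<and>
           (\<forall>i<n. \<tau> i > 0 \<and> 0 \<le> a i \<and> a i \<le> 1 \<and> b i \<ge> 0) \<and>
           is_NE n m (\<lambda>_. 1) \<pi> \<tau> a b \<sigma> \<and>
           Cmax n (\<lambda>_. 1) \<pi> \<tau> a b \<sigma> \<ge> (3 - 2 / real m - \<epsilon>) * OPT n m (\<lambda>_. 1) \<pi> \<tau> a b"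
proof -
  have e0: "0 < \<epsilon>" and e1: "\<epsilon> < 1" and m: "m \<ge> 2" using assms by auto
  define \<delta> where "\<delta> = \<epsilon> / (3 * real m)"
  have rm: "2 \<le> real m" using m by simp
  have d0: "0 < \<delta>" unfolding \<delta>_def using e0 rm by simp
  have d1: "\<delta> < 1" unfolding \<delta>_def using e1 rm by (simp add: divide_less_eq)
  have A: "Suc (m + Pn m) \<ge> 1" by simp
  have B: "bij_betw Suc {..<Suc (m + Pn m)} {1..Suc (m + Pn m)}"
    by (rule bij_betw_imageI) (auto simp: image_Suc_lessThan)
  have C: "\<forall>i<Suc (m + Pn m). tauI m \<delta> i > 0 \<and> 0 \<le> aI m i \<and> aI m i \<le> 1 \<and> aI m i \<ge> 0"
    using d0 m by (simp add: tauI_def aI_def)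
  have D: "is_NE (Suc (m + Pn m)) m (\<lambda>_. 1) Suc (tauI m \<delta>) (aI m) (aI m) (sigN m)"
    by (rule NE_part[OF m d0 d1])
  define c where "c = 3 - 2 / real m - \<epsilon>"
  have c0: "0 \<le> c"
  proof -
    have "2 / real m \<le> 1" using rm by simp
    then show ?thesis unfolding c_def using e1 by linarith
  qed
  have c3: "c \<le> 3"
  proof -
    have "0 \<le> 2 / real m" using rm by simp
    then show ?thesis unfolding c_def using e0 by linarith
  qed
  have md: "real (m - 1) * \<delta> \<le> \<epsilon> / 3"
  proof -
    have "real (m - 1) * \<delta> = (real (m - 1) / real m) * (\<epsilon> / 3)" unfolding \<delta>_def by simp
    also have "\<dots> \<le> 1 * (\<epsilon> / 3)"
      by (rule mult_right_mono) (use rm e0 in auto)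
    finally show ?thesis by simp
  qed
  have E: "Cmax (Suc (m + Pn m)) (\<lambda>_. 1) Suc (tauI m \<delta>) (aI m) (aI m) (sigN m)
     \<ge> (3 - 2 / real m - \<epsilon>) * OPT (Suc (m + Pn m)) m (\<lambda>_. 1) Suc (tauI m \<delta>) (aI m) (aI m)"
  proof -
    have "c * OPT (Suc (m + Pn m)) m (\<lambda>_. 1) Suc (tauI m \<delta>) (aI m) (aI m) \<le> c * (1 + real (m - 1) * \<delta>)"
      by (rule mult_left_mono[OF OPT_ub[OF m d0 d1] c0])
    also have "\<dots> \<le> c * (1 + \<epsilon> / 3)"
      by (rule mult_left_mono) (use md c0 in auto)
    also have "\<dots> = c + c * (\<epsilon> / 3)" by (simp add: algebra_simps)
    also have "\<dots> \<le> c + 3 * (\<epsilon> / 3)"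
      using mult_right_mono[OF c3, of "\<epsilon> / 3"] e0 by simp
    also have "\<dots> = 3 - 2 / real m" unfolding c_def by simp
    also have "\<dots> \<le> Cmax (Suc (m + Pn m)) (\<lambda>_. 1) Suc (tauI m \<delta>) (aI m) (aI m) (sigN m)"
      by (rule Cmax_lb[OF m d0 d1])
    finally show ?thesis unfolding c_def .
  qed
  show ?thesis
    apply (rule exI[of _ "Suc (m + Pn m)"])
    apply (rule exI[of _ Suc])
    apply (rule exI[of _ "tauI m \<delta>"])
    apply (rule exI[of _ "aI m"])
    apply (rule exI[of _ "aI m"])
    apply (rule exI[of _ "sigN m"])
    using A B C D E by blast
qed

end
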